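(* Let $m\ge 4$ and $n\ge 5$ be integers with $n$ odd. On an $m\times n$ board with White king on $(m,1)$, White rook on $(1,1)$, Black king on $(m,n)$, and White to move, White can force checkmate within $n$ moves.
   Context: The board is the set of squares $(x,y)$ with $1\le x\le m$ (column) and $1\le y\le n$ (row). The pieces move and capture as in ordinary chess, restricted to this rectangular board: a king moves to any of the up to eight adjacent squares, and a rook moves any number of squares along its row or column without passing through another piece. The usual legality rules apply: a king may not move to a square attacked by an enemy piece, and the kings may never be adjacent. Black is checkmated if the Black king is attacked and Black has no legal move. "White can force checkmate within $k$ moves" means White has a strategy such that, against every sequence of legal Black replies, Black is checkmated by one of White's first $k$ moves; the players alternate, White first. *)

theory Defs
  imports Main
begin

text \<open>Squares are pairs (x,y) of integers: x is the column (1..m), y the row (1..n).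
A position is (White king, White rook (None once captured), Black king).\<close>

type_synonym sq = "int \<times> int"
type_synonym pos = "sq \<times> sq option \<times> sq"

definition on_board :: "nat \<Rightarrow> nat \<Rightarrow> sq \<Rightarrow> bool" where
  "on_board m n s \<longleftrightarrow> 1 \<le> fst s \<and> fst s \<le> int m \<and> 1 \<le> snd s \<and> snd s \<le> int n"

definition adj :: "sq \<Rightarrow> sq \<Rightarrow> bool" where
  "adj a b \<longleftrightarrow> a \<noteq> b \<and> \<bar>fst a - fst b\<bar> \<le> 1 \<and> \<bar>snd a - snd b\<bar> \<le> 1"

definition strictly_between :: "sq \<Rightarrow> sq \<Rightarrow> sq \<Rightarrow> bool" where
  "strictly_between a b c \<longleftrightarrow>
     (fst a = fst b \<and> fst c = fst a \<and> min (snd a) (snd b) < snd c \<and> snd c < max (snd a) (snd b)) \<or>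
     (snd a = snd b \<and> snd c = snd a \<and> min (fst a) (fst b) < fst c \<and> fst c < max (fst a) (fst b))"

definition rook_attacks :: "sq \<Rightarrow> sq set \<Rightarrow> sq \<Rightarrow> bool" where
  "rook_attacks r B s \<longleftrightarrow> r \<noteq> s \<and> (fst r = fst s \<or> snd r = snd s) \<and>
     (\<forall>c\<in>B. \<not> strictly_between r s c)"

fun white_moves :: "nat \<Rightarrow> nat \<Rightarrow> pos \<Rightarrow> pos set" where
  "white_moves m n (wk, wr, bk) =
     {(k', wr, bk) | k'. on_board m n k' \<and> adj wk k' \<and> Some k' \<noteq> wr \<and> k' \<noteq> bk \<and> \<not> adj k' bk}
   \<union> {(wk, Some r', bk) | r r'. wr = Some r \<and> on_board m n r' \<and> rook_attacks r {wk, bk} r'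
        \<and> r' \<noteq> wk \<and> r' \<noteq> bk}"

fun in_check :: "pos \<Rightarrow> bool" where
  "in_check (wk, wr, bk) \<longleftrightarrow> (\<exists>r. wr = Some r \<and> rook_attacks r {wk} bk)"

text \<open>Legal Black king moves (possibly capturing the rook). The Black king itself
does not block the rook's line when it moves.\<close>
fun black_moves :: "nat \<Rightarrow> nat \<Rightarrow> pos \<Rightarrow> pos set" where
  "black_moves m n (wk, wr, bk) =
     {(wk, (if wr = Some s then None else wr), s) | s. on_board m n s \<and> adj bk s \<and> s \<noteq> wk
        \<and> \<not> adj s wk \<and> \<not> (\<exists>r. wr = Some r \<and> r \<noteq> s \<and> rook_attacks r {wk} s)}"

definition mated :: "nat \<Rightarrow> nat \<Rightarrow> pos \<Rightarrow> bool" where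
  "mated m n p \<longleftrightarrow> in_check p \<and> black_moves m n p = {}"

primrec forced_mate :: "nat \<Rightarrow> nat \<Rightarrow> nat \<Rightarrow> pos \<Rightarrow> bool" where
  "forced_mate m n 0 p = False"
| "forced_mate m n (Suc k) p =
     (\<exists>p'\<in>white_moves m n p. mated m n p' \<or>
        (black_moves m n p' \<noteq> {} \<and> (\<forall>p''\<in>black_moves m n p'. forced_mate m n k p'')))"

end

theory Submission
  imports Defs
begin

lemma bm_iff: "x \<in> black_moves m n (wk, wr, bk) \<longleftrightarrow> (\<exists>s. x = (wk, (if wr = Some s then None else wr), s) \<and> on_board m n s \<and> adj bk s \<and> s \<noteq> wk
        \<and> \<not> adj s wk \<and> \<not> (\<exists>r. wr = Some r \<and> r \<noteq> s \<and> rook_attacks r {wk} s))"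
  by auto

lemma step_black:
  fixes M N j b :: int
  assumes "M \<ge> 4" "1 \<le> j" "b \<le> int n" "b - j \<ge> 2" "M = int m"
    and "x \<in> black_moves m n ((M, j), Some (M - 1, 1), (M, b))"
  shows "\<exists>b'. x = ((M, j), Some (M - 1, 1), (M, b')) \<and> (b' = b + 1 \<or> b' = b - 1) \<and> b' \<le> int n \<and> b' - j \<ge> 2"
proof -
  obtain s where x0: "x = ((M, j), (if Some (M - 1, 1) = Some s then None else Some (M - 1, 1)), s)"
    and ob0: "on_board m n s" and a10: "adj (M,b) s" and a20: "\<not> adj s (M,j)"
    and nr0: "\<not> ((M-1,1) \<noteq> s \<and> rook_attacks (M-1,1) {(M,j)} s)"
    using assms(6) unfolding bm_iff by blast
  obtain s1 s2 where ss: "s = (s1,s2)" by fastforce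
  note x = x0[unfolded ss] and ob = ob0[unfolded ss] and a1 = a10[unfolded ss] and a2 = a20[unfolded ss]
    and nr = nr0[unfolded ss]
  have "s1 = M"
  proof (rule ccontr)
    assume "s1 \<noteq> M"
    then have "s1 = M - 1" using a1 ob assms unfolding adj_def on_board_def by auto
    moreover have "s2 \<noteq> 1"  using a1 a2 assms unfolding adj_def by auto
    ultimately have "rook_attacks (M-1,1) {(M,j)} (s1,s2)"
      unfolding rook_attacks_def strictly_between_def by auto
    then show False using nr `s2 \<noteq> 1` by auto
  qed
  then show ?thesis using x ob a1 a2 assms unfolding adj_def on_board_def by auto
qed

lemma adj_cases: "adj (a,b) (c,d) \<Longrightarrow> (c = a - 1 \<or> c = a \<or> c = a + 1) \<and> (d = b - 1 \<or> d = b \<or> d = b + 1) \<and> (c,d) \<noteq> (a,b)"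
  unfolding adj_def by auto

lemma bm1:
  fixes M N :: int
  assumes "M \<ge> 4" "N \<ge> 5" "M = int m" "N = int n"
  shows "black_moves m n ((M-1,N-2), Some(M-1,1), (M,N)) = {((M-1,N-2), Some(M-1,1), (M-1,N))}"
proof
  show "black_moves m n ((M-1,N-2), Some(M-1,1), (M,N)) \<subseteq> {((M-1,N-2), Some(M-1,1), (M-1,N))}"
  proof
    fix x assume "x \<in> black_moves m n ((M-1,N-2), Some(M-1,1), (M,N))"
    then obtain s where x0: "x = ((M-1,N-2), (if Some (M - 1, 1) = Some s then None else Some (M - 1, 1)), s)"
    and ob0: "on_board m n s" and a10: "adj (M,N) s" and a20: "\<not> adj s (M-1,N-2)"
    and nr0: "\<not> ((M-1,1) \<noteq> s \<and> rook_attacks (M-1,1) {(M-1,N-2)} s)"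
      unfolding bm_iff by blast
    obtain s1 s2 where ss: "s = (s1,s2)" by fastforce
    note x = x0[unfolded ss] and ob = ob0[unfolded ss] and a1 = a10[unfolded ss] and a2 = a20[unfolded ss]
      and nr = nr0[unfolded ss]
    have "s1 = M - 1 \<and> s2 = N"
      using adj_cases[OF a1] ob a2 assms unfolding on_board_def adj_def by auto
    then show "x \<in> {((M-1,N-2), Some(M-1,1), (M-1,N))}" using x assms by auto
  qed
next
  show "{((M-1,N-2), Some(M-1,1), (M-1,N))} \<subseteq> black_moves m n ((M-1,N-2), Some(M-1,1), (M,N))"
    unfolding bm_iff using assms
    by (auto simp: on_board_def adj_def rook_attacks_def strictly_between_def intro!: exI[of _ "(M-1,N)"])
qed

lemma bm2:
  fixes M N :: int
  assumes "M \<ge> 4" "N \<ge> 5" "M = int m" "N = int n"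
  shows "black_moves m n ((M-1,N-2), Some(M-2,1), (M-1,N)) = {((M-1,N-2), Some(M-2,1), (M,N))}"
proof
  show "black_moves m n ((M-1,N-2), Some(M-2,1), (M-1,N)) \<subseteq> {((M-1,N-2), Some(M-2,1), (M,N))}"
  proof
    fix x assume "x \<in> black_moves m n ((M-1,N-2), Some(M-2,1), (M-1,N))"
    then obtain s where x0: "x = ((M-1,N-2), (if Some (M - 2, 1) = Some s then None else Some (M - 2, 1)), s)"
    and ob0: "on_board m n s" and a10: "adj (M-1,N) s" and a20: "\<not> adj s (M-1,N-2)"
    and nr0: "\<not> ((M-2,1) \<noteq> s \<and> rook_attacks (M-2,1) {(M-1,N-2)} s)"
      unfolding bm_iff by blast
    obtain s1 s2 where ss: "s = (s1,s2)" by fastforce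
    note x = x0[unfolded ss] and ob = ob0[unfolded ss] and a1 = a10[unfolded ss] and a2 = a20[unfolded ss]
      and nr = nr0[unfolded ss]
    have "s1 \<noteq> M - 2"
    proof
      assume h: "s1 = M - 2"
      have "s2 \<ge> N - 1" using adj_cases[OF a1] by auto
      then have "rook_attacks (M-2,1) {(M-1,N-2)} (s1,s2)"
        using h assms unfolding rook_attacks_def strictly_between_def by auto
      then show False using nr h `s2 \<ge> N - 1` assms by auto
    qed
    then have "s1 = M \<and> s2 = N"
      using adj_cases[OF a1] ob a2 assms unfolding on_board_def adj_def by auto
    then show "x \<in> {((M-1,N-2), Some(M-2,1), (M,N))}" using x assms by auto
  qed
next
  show "{((M-1,N-2), Some(M-2,1), (M,N))} \<subseteq> black_moves m n ((M-1,N-2), Some(M-2,1), (M-1,N))"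
    unfolding bm_iff using assms
    by (auto simp: on_board_def adj_def rook_attacks_def strictly_between_def intro!: exI[of _ "(M,N)"])
qed

lemma bm3:
  fixes M N :: int
  assumes "M \<ge> 4" "N \<ge> 5" "M = int m" "N = int n"
  shows "black_moves m n ((M-1,N-2), Some(M-2,N), (M,N)) = {}"
proof -
  have "x \<notin> black_moves m n ((M-1,N-2), Some(M-2,N), (M,N))" for x
  proof
    assume "x \<in> black_moves m n ((M-1,N-2), Some(M-2,N), (M,N))"
    then obtain s where 
    ob0: "on_board m n s" and a10: "adj (M,N) s" and a20: "\<not> adj s (M-1,N-2)"
    and nr0: "\<not> ((M-2,N) \<noteq> s \<and> rook_attacks (M-2,N) {(M-1,N-2)} s)"
      unfolding bm_iff by blast
    obtain s1 s2 where ss: "s = (s1,s2)" by fastforce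
    note ob = ob0[unfolded ss] and a1 = a10[unfolded ss] and a2 = a20[unfolded ss]
      and nr = nr0[unfolded ss]
    have "s1 = M - 1 \<and> s2 = N"
      using adj_cases[OF a1] ob a2 assms unfolding on_board_def adj_def by auto
    moreover have "rook_attacks (M-2,N) {(M-1,N-2)} (M-1,N)"
      unfolding rook_attacks_def strictly_between_def by auto
    ultimately show False using nr by auto
  qed
  then show ?thesis by blast
qed

lemma wm_king: "on_board m n k' \<Longrightarrow> adj wk k' \<Longrightarrow> Some k' \<noteq> wr \<Longrightarrow> k' \<noteq> bk \<Longrightarrow> \<not> adj k' bk
  \<Longrightarrow> (k', wr, bk) \<in> white_moves m n (wk, wr, bk)"
  unfolding white_moves.simps by (rule UnI1) blast

lemma wm_rook: "on_board m n r' \<Longrightarrow> rook_attacks r {wk, bk} r' \<Longrightarrow> r' \<noteq> wk \<Longrightarrow> r' \<noteq> bk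
  \<Longrightarrow> (wk, Some r', bk) \<in> white_moves m n (wk, Some r, bk)"
  unfolding white_moves.simps by (rule UnI2) blast

lemma fm_step: "p' \<in> white_moves m n p \<Longrightarrow> black_moves m n p' \<noteq> {} \<Longrightarrow>
   (\<And>p''. p'' \<in> black_moves m n p' \<Longrightarrow> forced_mate m n k p'') \<Longrightarrow> forced_mate m n (Suc k) p"
  by auto

lemma fm_mate: "p' \<in> white_moves m n p \<Longrightarrow> mated m n p' \<Longrightarrow> forced_mate m n (Suc k) p"
  by auto

lemma finale:
  fixes M N :: int
  assumes "M \<ge> 4" "N \<ge> 5" "M = int m" "N = int n"
  shows "forced_mate m n 3 ((M, N-3), Some(M-1,1), (M,N))"
proof -
  have f1: "forced_mate m n 1 ((M-1,N-2), Some(M-2,1), (M,N))"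
  proof -
    have "((M-1,N-2), Some(M-2,N), (M,N)) \<in> white_moves m n ((M-1,N-2), Some(M-2,1), (M,N))"
      by (rule wm_rook) (use assms in \<open>auto simp: on_board_def rook_attacks_def strictly_between_def\<close>)
    moreover have "mated m n ((M-1,N-2), Some(M-2,N), (M,N))"
      unfolding mated_def using bm3[OF assms] assms
      by (simp add: rook_attacks_def strictly_between_def)
    ultimately show ?thesis by (simp only: One_nat_def fm_mate)
  qed
  have f2: "forced_mate m n 2 ((M-1,N-2), Some(M-1,1), (M-1,N))"
    unfolding numeral_2_eq_2
  proof (rule fm_step)
    show "((M-1,N-2), Some(M-2,1), (M-1,N)) \<in> white_moves m n ((M-1,N-2), Some(M-1,1), (M-1,N))"
      by (rule wm_rook) (use assms in \<open>auto simp: on_board_def rook_attacks_def strictly_between_def\<close>)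
  qed (unfold bm2[OF assms], use f1 in \<open>auto simp del: forced_mate.simps\<close>)
  show ?thesis
    unfolding numeral_3_eq_3
  proof (rule fm_step)
    show "((M-1,N-2), Some(M-1,1), (M,N)) \<in> white_moves m n ((M, N-3), Some(M-1,1), (M,N))"
      by (rule wm_king) (use assms in \<open>auto simp: on_board_def adj_def\<close>)
  qed (unfold bm1[OF assms], use f2[unfolded numeral_2_eq_2] in \<open>auto simp del: forced_mate.simps\<close>)
qed

lemma walk:
  fixes M N :: int
  assumes "M \<ge> 4" "N \<ge> 5" "M = int m" "N = int n"
  shows "\<forall>j b. N - j = int k + 3 \<longrightarrow> 1 \<le> j \<longrightarrow> b \<le> N \<longrightarrow> odd (b - j) \<longrightarrow> b - j \<ge> 3 \<longrightarrow>
    forced_mate m n (k + 3) ((M, j), Some (M - 1, 1), (M, b))"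
proof (induction k)
  case 0
  show ?case
  proof (intro allI impI)
    fix j b :: int
    assume "N - j = int 0 + 3" "1 \<le> j" "b \<le> N" "odd (b - j)" "b - j \<ge> 3"
    then have "j = N - 3" "b = N" by auto
    then show "forced_mate m n (0 + 3) ((M, j), Some (M - 1, 1), (M, b))"
      using finale[OF assms] by simp
  qed
next
  case (Suc k)
  show ?case
  proof (intro allI impI)
    fix j b :: int
    assume h: "N - j = int (Suc k) + 3" "1 \<le> j" "b \<le> N" "odd (b - j)" "b - j \<ge> 3"
    have e: "Suc k + 3 = Suc (k + 3)" by simp
    show "forced_mate m n (Suc k + 3) ((M, j), Some (M - 1, 1), (M, b))"
      unfolding e
    proof (rule fm_step)
      show "((M, j+1), Some (M - 1, 1), (M, b)) \<in> white_moves m n ((M, j), Some (M - 1, 1), (M, b))"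
        by (rule wm_king) (use assms h in \<open>auto simp: on_board_def adj_def\<close>)
    next
      have b3: "b - j = 3 \<or> b - j \<ge> 5" using h(4) h(5) by presburger
      define b' where "b' = (if b - j \<ge> 5 then b - 1 else b + 1)"
      have "((M, j+1), Some (M - 1, 1), (M, b')) \<in> black_moves m n ((M, j+1), Some (M - 1, 1), (M, b))"
        unfolding bm_iff
        apply (rule exI[of _ "(M, b')"])
        using assms h b3 unfolding b'_def
        by (auto simp: on_board_def adj_def rook_attacks_def)
      then show "black_moves m n ((M, j+1), Some (M - 1, 1), (M, b)) \<noteq> {}" by blast
    next
      fix p'' assume p: "p'' \<in> black_moves m n ((M, j+1), Some (M - 1, 1), (M, b))"
      obtain c where c: "p'' = ((M, j+1), Some (M - 1, 1), (M, c))" "c = b + 1 \<or> c = b - 1" "c \<le> int n" "c - (j+1) \<ge> 2"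
        using step_black[OF assms(1) _ _ _ assms(3) p] h assms by auto
      have "odd (c - (j+1))" using c(2) h(4) by auto
      then have "c - (j+1) \<ge> 3" using c(4) by presburger
      then show "forced_mate m n (k + 3) p''"
        using Suc.IH c h assms by auto
    qed
  qed
qed

theorem lemma1:
  fixes m n :: nat
  assumes "m \<ge> 4" and "n \<ge> 5" and "odd n"
  shows "forced_mate m n n ((int m, 1), Some (1, 1), (int m, int n))"
proof -
  have a: "int m \<ge> 4" "int n \<ge> 5" using assms by auto
  define k where "k = n - 4"
  have k: "n = Suc (k + 3)" using assms(2) unfolding k_def by simp
  have W: "forced_mate m n (k + 3) ((int m, 1), Some (int m - 1, 1), (int m, int n - 1))"
  proof -
    have "odd (int n - 1 - 1)" using assms(3) by simp
    moreover have "int n - 1 = int k + 3" using k by simp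
    ultimately show ?thesis
      using walk[OF a refl refl, of k, rule_format, of 1 "int n - 1"] k a by simp
  qed
  have "forced_mate m n (Suc (k + 3)) ((int m, 1), Some (1, 1), (int m, int n))"
    proof (rule fm_step)
      show "((int m, 1), Some (int m - 1, 1), (int m, int n)) \<in> white_moves m n ((int m, 1), Some (1, 1), (int m, int n))"
        by (rule wm_rook) (use a in \<open>auto simp: on_board_def rook_attacks_def strictly_between_def\<close>)
    next
      have "((int m, 1), Some (int m - 1, 1), (int m, int n - 1)) \<in> black_moves m n ((int m, 1), Some (int m - 1, 1), (int m, int n))"
        unfolding bm_iff
        apply (rule exI[of _ "(int m, int n - 1)"])
        using a by (auto simp: on_board_def adj_def rook_attacks_def)
      then show "black_moves m n ((int m, 1), Some (int m - 1, 1), (int m, int n)) \<noteq> {}" by blast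
    next
      fix p'' assume p: "p'' \<in> black_moves m n ((int m, 1), Some (int m - 1, 1), (int m, int n))"
      obtain c where c: "p'' = ((int m, 1), Some (int m - 1, 1), (int m, c))" "c = int n + 1 \<or> c = int n - 1" "c \<le> int n"
        using step_black[OF a(1) _ _ _ refl p] a by auto
      then show "forced_mate m n (k + 3) p''" using W by auto
    qed
  then show ?thesis using k by simp
qed

end
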